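(* There is a deterministic algorithm in the Congested Clique model which, given an input graph $G$ with arboricity $a\ge 2$ and a parameter $0<\varepsilon\le 2$, computes an $H$-partition of $G$ of size $O(\log n)$ and degree at most $(2+\varepsilon)a$ (in particular $O(a)$), such that each vertex learns the index of the set it belongs to; the running time is $O(\log a)$ rounds.
   Context: Congested Clique model: there are $n$ processors (vertices) with distinct IDs of $O(\log n)$ bits; computation proceeds in synchronous rounds; in each round every pair of vertices may exchange a message of $O(\log n)$ bits; local computation is free. The input is a graph $G=(V,E')$ on the same vertex set (a subgraph of the $n$-clique); each vertex initially knows its incident edges in $G$, and the value $a$ is known to all vertices. Running time is the number of rounds. The arboricity of a graph is the minimum number of forests whose union covers its edge set. An $H$-partition $(H_1,\dots,H_\ell)$ of $G=(V,E)$ with degree $A$ is a partition of $V$ into $\ell$ sets such that every vertex in $H_i$ has at most $A$ neighbors in $H_i\cup\dots\cup H_\ell$; $\ell$ is its size. *)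

theory Defs
  imports Complex_Main
begin

definition simple_graph :: "nat \<Rightarrow> nat set set \<Rightarrow> bool" where
  "simple_graph n E \<longleftrightarrow> (\<forall>e\<in>E. \<exists>u v. e = {u, v} \<and> u \<noteq> v \<and> u < n \<and> v < n)"

definition forest :: "nat set set \<Rightarrow> bool" where
  "forest F \<longleftrightarrow> \<not> (\<exists>xs. length xs \<ge> 3 \<and> distinct xs \<and>
      (\<forall>i<length xs. {xs ! i, xs ! (Suc i mod length xs)} \<in> F))"

definition arboricity :: "nat set set \<Rightarrow> nat" where
  "arboricity E = (LEAST k. \<exists>F :: nat \<Rightarrow> nat set set.
      (\<forall>i<k. F i \<subseteq> E \<and> forest (F i)) \<and> E = (\<Union>i<k. F i))"

text \<open>H-partition given by an index function h: vertex v lies in H_(h v), indices in {1..l};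
  every vertex has at most A neighbours in H_(h v) \<union> ... \<union> H_l.\<close>
definition is_H_partition :: "nat \<Rightarrow> nat set set \<Rightarrow> real \<Rightarrow> nat \<Rightarrow> (nat \<Rightarrow> nat) \<Rightarrow> bool" where
  "is_H_partition n E A l h \<longleftrightarrow>
     (\<forall>v<n. h v \<in> {1..l}) \<and>
     (\<forall>v<n. real (card {u. u < n \<and> {u, v} \<in> E \<and> h u \<ge> h v}) \<le> A)"

text \<open>Local states are lists of naturals
  (local computation is free and unbounded).
  init n a v N: initial state of vertex v, knowing n, a, its ID v and its neighbourhood N.
  msg s u: message (a natural number) sent in the current round from a vertex in state s to u.
  step s r: new state, where r w is the message received from w.
  out s: the committed output (index of the H-set) or None if not yet decided.\<close>
datatype cc_alg = CCAlg
  (cc_init: "nat \<Rightarrow> nat \<Rightarrow> nat \<Rightarrow> nat set \<Rightarrow> nat list")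
  (cc_msg: "nat list \<Rightarrow> nat \<Rightarrow> nat")
  (cc_step: "nat list \<Rightarrow> (nat \<Rightarrow> nat) \<Rightarrow> nat list")
  (cc_out: "nat list \<Rightarrow> nat option")

fun cc_run :: "cc_alg \<Rightarrow> nat \<Rightarrow> nat \<Rightarrow> nat set set \<Rightarrow> nat \<Rightarrow> nat \<Rightarrow> nat list" where
  "cc_run A n a E 0 v = cc_init A n a v {u. {u, v} \<in> E}"
| "cc_run A n a E (Suc t) v =
     cc_step A (cc_run A n a E t v)
       (\<lambda>w. if w < n \<and> w \<noteq> v then cc_msg A (cc_run A n a E t w) v else 0)"

end

theory Submission
  imports Defs
begin


definition is_path :: "nat set set \<Rightarrow> nat set \<Rightarrow> nat list \<Rightarrow> bool" where
  "is_path F S xs \<longleftrightarrow> xs \<noteq> [] \<and> distinct xs \<and> set xs \<subseteq> S \<and>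
     (\<forall>i. Suc i < length xs \<longrightarrow> {xs ! i, xs ! Suc i} \<in> F)"

lemma forest_leaf:
  assumes fo: "forest F" and two: "\<forall>e\<in>F. \<exists>u v. e = {u,v} \<and> u \<noteq> v"
    and fin: "finite S" and ne: "S \<noteq> {}"
  shows "\<exists>x\<in>S. card {y\<in>S. {x,y} \<in> F} \<le> 1"
proof (rule ccontr)
  assume "\<not> ?thesis"
  hence deg: "\<forall>x\<in>S. 2 \<le> card {y\<in>S. {x,y} \<in> F}" by auto
  obtain x0 where x0: "x0 \<in> S" using ne by blast
  have P1: "\<exists>xs. is_path F S xs \<and> length xs = 1"
    by (rule exI[of _ "[x0]"]) (simp add: is_path_def x0)
  have bnd: "\<forall>m. (\<exists>xs. is_path F S xs \<and> length xs = m) \<longrightarrow> m \<le> card S"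
  proof (intro allI impI)
    fix m assume "\<exists>xs. is_path F S xs \<and> length xs = m"
    then obtain xs where "is_path F S xs" "length xs = m" by blast
    then show "m \<le> card S" unfolding is_path_def
      by (metis card_mono distinct_card fin)
  qed
  obtain m where m: "\<exists>xs. is_path F S xs \<and> length xs = m"
    and mmax: "\<forall>m'. (\<exists>xs. is_path F S xs \<and> length xs = m') \<longrightarrow> m' \<le> m"
    using Nat.ex_has_greatest_nat[OF P1 bnd] by blast
  obtain xs where xs: "is_path F S xs" and lx: "length xs = m" using m by blast
  have xsne: "xs \<noteq> []" and dxs: "distinct xs" and sxs: "set xs \<subseteq> S"
    and exs: "\<forall>i. Suc i < length xs \<longrightarrow> {xs ! i, xs ! Suc i} \<in> F"
    using xs by (auto simp: is_path_def)
  define x where "x = xs ! 0"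
  have xS: "x \<in> S" using xsne sxs x_def by (simp add: subset_iff)
  define Y where "Y = {y\<in>S. {x,y} \<in> F}"
  have cY: "2 \<le> card Y" using deg xS Y_def by auto
  have finY: "finite Y" using fin Y_def by auto
  obtain y where yY: "y \<in> Y" and yn: "1 < length xs \<longrightarrow> y \<noteq> xs ! 1"
  proof -
    have "card (Y - {xs ! 1}) \<ge> 1"
      using cY finY by (metis card_Diff_singleton_if diff_le_mono le_trans one_le_numeral
          numeral_le_one_iff semiring_norm(69) card_Diff1_le  Suc_1 diff_Suc_1 not_less_eq_eq)
    then have "Y - {xs ! 1} \<noteq> {}" by (metis card.empty not_one_le_zero)
    then show ?thesis using that by blast
  qed
  have yS: "y \<in> S" and xyF: "{x,y} \<in> F" using yY Y_def by auto
  have yx: "y \<noteq> x"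
  proof
    assume "y = x"
    then have "{x} \<in> F" using xyF by simp
    then obtain u v where "{x} = {u,v}" "u \<noteq> v" using two by blast
    then show False by (metis doubleton_eq_iff insert_absorb2)
  qed
  show False
  proof (cases "y \<in> set xs")
    case False
    have "is_path F S (y # xs)"
      unfolding is_path_def
    proof (intro conjI allI impI)
      show "y # xs \<noteq> []" by simp
      show "distinct (y # xs)" using False dxs by simp
      show "set (y # xs) \<subseteq> S" using sxs yS by simp
      fix i assume i: "Suc i < length (y # xs)"
      show "{(y # xs) ! i, (y # xs) ! Suc i} \<in> F"
      proof (cases i)
        case 0
        then show ?thesis using xyF x_def by (simp add: insert_commute)
      next
        case (Suc j)
        then show ?thesis using exs i by simp
      qed
    qed
    then have "Suc m \<le> m" using mmax lx by (metis length_Cons)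
    then show False by simp
  next
    case True
    then obtain j where j: "j < length xs" "xs ! j = y" by (metis in_set_conv_nth)
    have j0: "j \<noteq> 0" using j yx x_def by (metis)
    have j1: "j \<noteq> 1" using j yn by auto
    define cs where "cs = take (Suc j) xs"
    have lcs: "length cs = Suc j" using j cs_def by simp
    have "\<exists>xs. length xs \<ge> 3 \<and> distinct xs \<and>
      (\<forall>i<length xs. {xs ! i, xs ! (Suc i mod length xs)} \<in> F)"
    proof (intro exI conjI allI impI)
      show "3 \<le> length cs" using lcs j0 j1 by simp
      show "distinct cs" using dxs cs_def by simp
      fix i assume i: "i < length cs"
      show "{cs ! i, cs ! (Suc i mod length cs)} \<in> F"
      proof (cases "i < j")
        case True
        then have "Suc i mod length cs = Suc i" using lcs by simp
        then show ?thesis using True exs j cs_def by simp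
      next
        case False
        then have ij: "i = j" using i lcs by simp
        then have "Suc i mod length cs = 0" using lcs by simp
        then show ?thesis using ij j cs_def xyF x_def by (simp add: insert_commute)
      qed
    qed
    then show False using fo unfolding forest_def by blast
  qed
qed

lemma forest_edges:
  assumes fo: "forest F" and two: "\<forall>e\<in>F. \<exists>u v. e = {u,v} \<and> u \<noteq> v"
    and fin: "finite S"
  shows "card {e\<in>F. e \<subseteq> S} \<le> card S"
  using fin
proof (induct "card S" arbitrary: S rule: less_induct)
  case less
  show ?case
  proof (cases "S = {}")
    case True
    have "{e\<in>F. e \<subseteq> S} = {}" using True two by auto
    then show ?thesis by (metis card.empty zero_le)
  next
    case False
    obtain x where xS: "x \<in> S" and leaf: "card {y\<in>S. {x,y} \<in> F} \<le> 1"
      using forest_leaf[OF fo two less.prems False] by blast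
    have sub: "{e\<in>F. e \<subseteq> S} \<subseteq> {e\<in>F. e \<subseteq> S - {x}} \<union> (\<lambda>y. {x,y}) ` {y\<in>S. {x,y} \<in> F}"
    proof
      fix e assume e: "e \<in> {e\<in>F. e \<subseteq> S}"
      then obtain u v where uv: "e = {u,v}" using two by blast
      show "e \<in> {e\<in>F. e \<subseteq> S - {x}} \<union> (\<lambda>y. {x,y}) ` {y\<in>S. {x,y} \<in> F}"
      proof (cases "x \<in> e")
        case False
        then show ?thesis using e by auto
      next
        case True
        then have "u = x \<or> v = x" using uv by auto
        then show ?thesis
        proof
          assume "u = x" then show ?thesis using e uv by auto
        next
          assume "v = x" then have "e = {x,u}" using uv by (simp add: insert_commute)
          then show ?thesis using e uv by auto
        qed
      qed
    qed
    have f1: "finite {e\<in>F. e \<subseteq> S - {x}}"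
      by (rule finite_subset[of _ "Pow (S - {x})"]) (use less.prems in auto)
    have f2: "finite {y\<in>S. {x,y} \<in> F}" using less.prems by auto
    have "card {e\<in>F. e \<subseteq> S} \<le> card ({e\<in>F. e \<subseteq> S - {x}} \<union> (\<lambda>y. {x,y}) ` {y\<in>S. {x,y} \<in> F})"
      by (rule card_mono) (use f1 f2 sub in auto)
    also have "\<dots> \<le> card {e\<in>F. e \<subseteq> S - {x}} + card ((\<lambda>y. {x,y}) ` {y\<in>S. {x,y} \<in> F})"
      by (rule card_Un_le)
    also have "\<dots> \<le> card (S - {x}) + 1"
    proof -
      have "card {e\<in>F. e \<subseteq> S - {x}} \<le> card (S - {x})"
      proof -
        have cpos: "0 < card S" using less.prems xS by (auto simp: card_gt_0_iff)
        show ?thesis using less.hyps[of "S - {x}"] less.prems xS cpos by (simp add: card_Diff_singleton)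
      qed
      moreover have "card ((\<lambda>y. {x,y}) ` {y\<in>S. {x,y} \<in> F}) \<le> 1"
        using card_image_le[OF f2, of "\<lambda>y. {x,y}"] leaf by linarith
      ultimately show ?thesis by linarith
    qed
    also have "\<dots> = card S" using xS less.prems
      by (simp add: card_Diff_singleton) (metis Suc_pred card_gt_0_iff empty_iff)
    finally show ?thesis .
  qed
qed

lemma simple_two: "simple_graph n E \<Longrightarrow> F \<subseteq> E \<Longrightarrow> \<forall>e\<in>F. \<exists>u v. e = {u,v} \<and> u \<noteq> v"
  unfolding simple_graph_def by blast

lemma simple_finite: "simple_graph n E \<Longrightarrow> finite E"
  unfolding simple_graph_def
  by (rule finite_subset[of _ "Pow {0..<n}"]) auto

lemma single_forest: "forest {e}" if "\<exists>u v. e = {u,v} \<and> u \<noteq> v"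
  unfolding forest_def
proof
  assume "\<exists>xs. 3 \<le> length xs \<and> distinct xs \<and> (\<forall>i<length xs. {xs ! i, xs ! (Suc i mod length xs)} \<in> {e})"
  then obtain xs where l: "3 \<le> length xs" and d: "distinct xs"
    and c: "\<forall>i<length xs. {xs ! i, xs ! (Suc i mod length xs)} \<in> {e}" by blast
  have l0: "0 < length xs" "1 < length xs" "2 < length xs" using l by auto
  have "{xs ! 0, xs ! 1} = e" using c[rule_format, OF l0(1)] l by simp
  moreover have "{xs ! 1, xs ! 2} = e" using c[rule_format, OF l0(2)] l by (simp add: numeral_2_eq_2)
  ultimately have "xs ! 2 = xs ! 0 \<or> xs ! 2 = xs ! 1" by (metis doubleton_eq_iff)
  moreover have "xs ! 2 \<noteq> xs ! 0" "xs ! 2 \<noteq> xs ! 1" using d l0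
    by (simp_all add: nth_eq_iff_index_eq)
  ultimately show False by blast
qed

lemma arb_density:
  assumes sg: "simple_graph n E" and arb: "arboricity E = a" and fin: "finite S"
  shows "card {e\<in>E. e \<subseteq> S} \<le> a * card S"
proof -
  have finE: "finite E" using simple_finite[OF sg] .
  obtain xs where xs: "set xs = E" "distinct xs" using finite_distinct_list[OF finE] by blast
  have ex: "\<exists>F :: nat \<Rightarrow> nat set set. (\<forall>i<length xs. F i \<subseteq> E \<and> forest (F i)) \<and> E = (\<Union>i<length xs. F i)"
  proof (intro exI[of _ "\<lambda>i. {xs ! i}"] conjI allI impI)
    fix i assume i: "i < length xs"
    show "{xs ! i} \<subseteq> E" using i xs by auto
    show "forest {xs ! i}" using i xs sg unfolding simple_graph_def
      by (intro single_forest) (meson nth_mem)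
  next
    show "E = (\<Union>i<length xs. {xs ! i})" using xs by (auto simp: in_set_conv_nth)
  qed
  let ?P = "\<lambda>k. \<exists>F :: nat \<Rightarrow> nat set set. (\<forall>i<k. F i \<subseteq> E \<and> forest (F i)) \<and> E = (\<Union>i<k. F i)"
  have "?P (Least ?P)" by (rule LeastI_ex[where P = ?P]) (rule exI[of _ "length xs"], rule ex)
  then have "?P a" using arb unfolding arboricity_def by simp
  then obtain F :: "nat \<Rightarrow> nat set set" where F: "\<forall>i<a. F i \<subseteq> E \<and> forest (F i)" and EF: "E = (\<Union>i<a. F i)"
    by blast
  have "{e\<in>E. e \<subseteq> S} = (\<Union>i<a. {e\<in>F i. e \<subseteq> S})" using EF by auto
  then have "card {e\<in>E. e \<subseteq> S} \<le> (\<Sum>i<a. card {e\<in>F i. e \<subseteq> S})"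
    by (simp add: card_UN_le)
  also have "\<dots> \<le> (\<Sum>i<a. card S)"
  proof (rule sum_mono)
    fix i assume "i \<in> {..<a}"
    then have "F i \<subseteq> E" "forest (F i)" using F by auto
    then show "card {e\<in>F i. e \<subseteq> S} \<le> card S"
      using forest_edges[OF _ simple_two[OF sg] fin] by blast
  qed
  finally show ?thesis by simp
qed

lemma deg_sum:
  assumes sg: "simple_graph n E" and fin: "finite S"
  shows "(\<Sum>v\<in>S. card {u\<in>S. {u,v} \<in> E}) \<le> 2 * card {e\<in>E. e \<subseteq> S}"
proof -
  have finE: "finite E" using simple_finite[OF sg] .
  let ?Ed = "{e\<in>E. e \<subseteq> S}"
  have "(\<Sum>v\<in>S. card {u\<in>S. {u,v} \<in> E}) = card (SIGMA v:S. {u\<in>S. {u,v} \<in> E})"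
    using fin by simp
  also have "\<dots> \<le> card (\<Union>e\<in>?Ed. {(p,q). {q,p} = e})"
  proof (rule card_mono)
    show "finite (\<Union>e\<in>?Ed. {(p,q). {q,p} = e})"
      by (rule finite_subset[of _ "S \<times> S"]) (use fin in auto)
    show "(SIGMA v:S. {u\<in>S. {u,v} \<in> E}) \<subseteq> (\<Union>e\<in>?Ed. {(p,q). {q,p} = e})" by auto
  qed
  also have "\<dots> \<le> (\<Sum>e\<in>?Ed. card {(p,q). {q,p} = e})"
    by (rule card_UN_le) (use finE in auto)
  also have "\<dots> \<le> (\<Sum>e\<in>?Ed. 2)"
  proof (rule sum_mono)
    fix e assume "e \<in> ?Ed"
    then obtain x y where e: "e = {x,y}" using sg unfolding simple_graph_def by blast
    have "{(p,q). {q,p} = e} \<subseteq> {(y,x),(x,y)}" using e by (auto simp: doubleton_eq_iff)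
    then have "card {(p,q). {q,p} = e} \<le> card {(y,x),(x,y)}" by (intro card_mono) auto
    also have "\<dots> \<le> 2" by (simp add: card_insert_le_m1)
    finally show "card {(p,q). {q,p} = e} \<le> 2" .
  qed
  finally show ?thesis by (simp add: mult.commute)
qed




definition nbr :: "nat \<Rightarrow> nat set set \<Rightarrow> nat \<Rightarrow> nat set" where
  "nbr n E v = {u. u < n \<and> {u,v} \<in> E}"

fun Al :: "nat \<Rightarrow> nat set set \<Rightarrow> real \<Rightarrow> nat \<Rightarrow> nat set" where
  "Al n E d 0 = {0..<n}"
| "Al n E d (Suc i) = {v \<in> Al n E d i. d < real (card (nbr n E v \<inter> Al n E d i))}"

lemma Al_Suc_sub: "Al n E d (Suc i) \<subseteq> Al n E d i"
  by (simp only: Al.simps) blast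

lemma Al_sub: "Al n E d i \<subseteq> {0..<n}"
  by (induction i) (simp, use Al_Suc_sub in blast)

lemma Al_anti: "i \<le> j \<Longrightarrow> Al n E d j \<subseteq> Al n E d i"
proof (induction j)
  case 0 then show ?case by simp
next
  case (Suc j)
  show ?case
  proof (cases "i = Suc j")
    case True then show ?thesis by simp
  next
    case False
    then have "i \<le> j" using Suc.prems by simp
    then show ?thesis using Suc.IH Al_Suc_sub[of n E d j] by (rule_tac subset_trans) auto
  qed
qed

lemma Al_fin: "finite (Al n E d i)"
  by (rule finite_subset[OF Al_sub]) simp

lemma shrink:
  assumes sg: "simple_graph n E" and arb: "arboricity E = a" and d: "d = (2 + eps) * real a"
    and a0: "0 < a" and e0: "0 < eps"
  shows "real (card (Al n E d (Suc i))) \<le> (2 / (2 + eps)) * real (card (Al n E d i))"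
proof -
  let ?S = "Al n E d i" and ?X = "Al n E d (Suc i)"
  have nb: "\<And>v. nbr n E v \<inter> ?S = {u\<in>?S. {u,v} \<in> E}"
    using Al_sub[of n E d i] unfolding nbr_def by auto
  have "real (card ?X) * d = (\<Sum>v\<in>?X. d)" by simp
  also have "\<dots> \<le> (\<Sum>v\<in>?X. real (card (nbr n E v \<inter> ?S)))"
    by (rule sum_mono) auto
  also have "\<dots> \<le> (\<Sum>v\<in>?S. real (card (nbr n E v \<inter> ?S)))"
    by (rule sum_mono2) (auto simp: Al_fin)
  also have "\<dots> = real (\<Sum>v\<in>?S. card {u\<in>?S. {u,v} \<in> E})"
    by (simp add: nb)
  also have "\<dots> \<le> real (2 * card {e\<in>E. e \<subseteq> ?S})"
    using deg_sum[OF sg Al_fin[of n E d i]] by linarith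
  also have "\<dots> \<le> real (2 * (a * card ?S))"
    using arb_density[OF sg arb Al_fin[of n E d i]] by (simp only: of_nat_le_iff)
  finally have *: "real (card ?X) * ((2 + eps) * real a) \<le> 2 * real a * real (card ?S)"
    using d by simp
  have "(real (card ?X) * (2 + eps)) * real a \<le> (2 * real (card ?S)) * real a"
    using * by (simp add: algebra_simps)
  then have **: "real (card ?X) * (2 + eps) \<le> 2 * real (card ?S)"
    using a0 by (simp add: mult_le_cancel_right)
  have pos: "0 < 2 + eps" using e0 by simp
  have "real (card ?X) \<le> 2 * real (card ?S) / (2 + eps)"
    by (simp only: pos_le_divide_eq[OF pos]) (rule **)
  also have "\<dots> = (2 / (2 + eps)) * real (card ?S)" by simp
  finally show ?thesis .
qed

lemma card_Al:
  assumes sg: "simple_graph n E" and arb: "arboricity E = a" and d: "d = (2 + eps) * real a"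
    and a0: "0 < a" and e0: "0 < eps"
  shows "real (card (Al n E d i)) \<le> (2 / (2 + eps)) ^ i * real n"
proof (induction i)
  case 0 then show ?case by simp
next
  case (Suc i)
  have q0: "0 \<le> 2 / (2 + eps)" using e0 by simp
  have "real (card (Al n E d (Suc i))) \<le> (2 / (2 + eps)) * real (card (Al n E d i))"
    by (rule shrink[OF sg arb d a0 e0])
  also have "\<dots> \<le> (2 / (2 + eps)) * ((2 / (2 + eps)) ^ i * real n)"
    by (rule mult_left_mono[OF Suc.IH q0])
  finally show ?case by simp
qed

definition hlev :: "nat \<Rightarrow> nat set set \<Rightarrow> real \<Rightarrow> nat \<Rightarrow> nat" where
  "hlev n E d v = Suc (LEAST i. v \<notin> Al n E d (Suc i))"

lemma mem_Al_iff:
  assumes emp: "Al n E d L = {}" and vn: "v < n"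
  shows "v \<in> Al n E d j \<longleftrightarrow> j < hlev n E d v"
proof -
  have "v \<notin> Al n E d (Suc L)" using emp Al_Suc_sub[of n E d L] by blast
  then have ex: "\<exists>i. v \<notin> Al n E d (Suc i)" by blast
  let ?i = "LEAST i. v \<notin> Al n E d (Suc i)"
  have ni: "v \<notin> Al n E d (Suc ?i)" using LeastI_ex[OF ex] .
  have lt: "\<And>i. i < ?i \<Longrightarrow> v \<in> Al n E d (Suc i)" using not_less_Least by blast
  show ?thesis
  proof
    assume v: "v \<in> Al n E d j"
    show "j < hlev n E d v"
    proof (rule ccontr)
      assume "\<not> j < hlev n E d v"
      then have "Suc ?i \<le> j" unfolding hlev_def by simp
      then have "Al n E d j \<subseteq> Al n E d (Suc ?i)" by (rule Al_anti)
      then show False using v ni by blast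
    qed
  next
    assume "j < hlev n E d v"
    then have j: "j \<le> ?i" unfolding hlev_def by simp
    show "v \<in> Al n E d j"
    proof (cases j)
      case 0
      then show ?thesis using vn by simp
    next
      case (Suc j')
      then show ?thesis using lt[of j'] j by simp
    qed
  qed
qed

lemma Hpart:
  assumes emp: "Al n E d L = {}"
  shows "is_H_partition n E d L (hlev n E d)"
  unfolding is_H_partition_def
proof (intro conjI allI impI)
  fix v assume vn: "v < n"
  have "v \<notin> Al n E d L" using emp by simp
  then have "\<not> L < hlev n E d v" using mem_Al_iff[OF emp vn] by simp
  moreover have "1 \<le> hlev n E d v" unfolding hlev_def by simp
  ultimately show "hlev n E d v \<in> {1..L}" by simp
next
  fix v assume vn: "v < n"
  define i0 where "i0 = hlev n E d v - 1"
  have hv: "hlev n E d v = Suc i0" unfolding i0_def hlev_def by simp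
  have vi: "v \<in> Al n E d i0" using mem_Al_iff[OF emp vn] hv by simp
  have vs: "v \<notin> Al n E d (Suc i0)" using mem_Al_iff[OF emp vn, of "Suc i0"] hv by (simp del: Al.simps)
  have le: "\<not> d < real (card (nbr n E v \<inter> Al n E d i0))" using vi vs by simp
  have "{u. u < n \<and> {u, v} \<in> E \<and> hlev n E d v \<le> hlev n E d u} = nbr n E v \<inter> Al n E d i0"
    using mem_Al_iff[OF emp] hv unfolding nbr_def by auto
  then show "real (card {u. u < n \<and> {u, v} \<in> E \<and> hlev n E d v \<le> hlev n E d u}) \<le> d"
    using le by simp
qed




section \<open>Intended messages\<close>

definition degR :: "nat \<Rightarrow> nat set set \<Rightarrow> real \<Rightarrow> nat \<Rightarrow> nat \<Rightarrow> nat" where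
  "degR n E d k w = (if w \<in> Al n E d k then card (nbr n E w \<inter> Al n E d k) else 0)"

definition Sg :: "nat \<Rightarrow> nat set set \<Rightarrow> real \<Rightarrow> nat \<Rightarrow> nat \<Rightarrow> nat" where
  "Sg n E d k w = (\<Sum>x<w. degR n E d k x)"

definition SM :: "nat \<Rightarrow> nat set set \<Rightarrow> real \<Rightarrow> nat \<Rightarrow> nat \<Rightarrow> nat \<Rightarrow> nat" where
  "SM n E d k w u = (if w \<in> Al n E d k \<and> Sg n E d k w \<le> u \<and> u < Sg n E d k w + degR n E d k w
     then sorted_list_of_set (nbr n E w \<inter> Al n E d k) ! (u - Sg n E d k w) + 1 else 0)"

definition relayval :: "nat \<Rightarrow> nat set set \<Rightarrow> real \<Rightarrow> nat \<Rightarrow> nat \<Rightarrow> nat" where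
  "relayval n E d k p = (if \<exists>w<n. SM n E d k w p \<noteq> 0 then
     (let w = LEAST w. w < n \<and> SM n E d k w p \<noteq> 0 in w * n + SM n E d k w p) else 0)"

definition Mint :: "nat \<Rightarrow> nat set set \<Rightarrow> real \<Rightarrow> nat \<Rightarrow> nat \<Rightarrow> nat \<Rightarrow> nat \<Rightarrow> nat" where
  "Mint n E d k j w u = (if j \<le> k then (if w \<in> Al n E d j then 1 else 0)
     else if j = Suc k then degR n E d k w
     else if j = Suc (Suc k) then SM n E d k w u
     else if j = Suc (Suc (Suc k)) then relayval n E d k w else 0)"

section \<open>Local protocol\<close>

fun selfA :: "real \<Rightarrow> nat \<Rightarrow> nat set \<Rightarrow> (nat \<Rightarrow> nat \<Rightarrow> nat) \<Rightarrow> nat \<Rightarrow> bool" where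
  "selfA d n N Rcv 0 = True"
| "selfA d n N Rcv (Suc i) = (selfA d n N Rcv i \<and> d < real (card {u \<in> N. u < n \<and> Rcv i u = 1}))"

definition knowR :: "real \<Rightarrow> nat \<Rightarrow> nat \<Rightarrow> nat \<Rightarrow> nat set \<Rightarrow> (nat \<Rightarrow> nat \<Rightarrow> nat) \<Rightarrow> nat set" where
  "knowR d k n v N Rcv = {u. u < n \<and> (if u = v then selfA d n N Rcv k else Rcv k u = 1)}"

definition Dv :: "real \<Rightarrow> nat \<Rightarrow> nat \<Rightarrow> nat \<Rightarrow> nat set \<Rightarrow> (nat \<Rightarrow> nat \<Rightarrow> nat) \<Rightarrow> nat \<Rightarrow> nat" where
  "Dv d k n v N Rcv w = (if w = v then (if selfA d n N Rcv k then card (N \<inter> knowR d k n v N Rcv) else 0)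
     else Rcv (Suc k) w)"

definition Sv :: "real \<Rightarrow> nat \<Rightarrow> nat \<Rightarrow> nat \<Rightarrow> nat set \<Rightarrow> (nat \<Rightarrow> nat \<Rightarrow> nat) \<Rightarrow> nat" where
  "Sv d k n v N Rcv = (\<Sum>w<v. Dv d k n v N Rcv w)"

definition SMv :: "real \<Rightarrow> nat \<Rightarrow> nat \<Rightarrow> nat \<Rightarrow> nat set \<Rightarrow> (nat \<Rightarrow> nat \<Rightarrow> nat) \<Rightarrow> nat \<Rightarrow> nat" where
  "SMv d k n v N Rcv u = (if selfA d n N Rcv k \<and> Sv d k n v N Rcv \<le> u \<and> u < Sv d k n v N Rcv + Dv d k n v N Rcv v
     then sorted_list_of_set (N \<inter> knowR d k n v N Rcv) ! (u - Sv d k n v N Rcv) + 1 else 0)"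

definition relayv :: "real \<Rightarrow> nat \<Rightarrow> nat \<Rightarrow> nat \<Rightarrow> nat set \<Rightarrow> (nat \<Rightarrow> nat \<Rightarrow> nat) \<Rightarrow> nat" where
  "relayv d k n v N Rcv = (if \<exists>w<n. w \<noteq> v \<and> Rcv (Suc (Suc k)) w \<noteq> 0 then
     (let w = LEAST w. w < n \<and> w \<noteq> v \<and> Rcv (Suc (Suc k)) w \<noteq> 0 in w * n + Rcv (Suc (Suc k)) w)
     else if SMv d k n v N Rcv v \<noteq> 0 then v * n + SMv d k n v N Rcv v else 0)"

definition Pmsg :: "real \<Rightarrow> nat \<Rightarrow> nat \<Rightarrow> nat \<Rightarrow> nat set \<Rightarrow> nat \<Rightarrow> (nat \<Rightarrow> nat \<Rightarrow> nat) \<Rightarrow> nat \<Rightarrow> nat" where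
  "Pmsg d k n v N t Rcv u = (if t \<le> k then (if selfA d n N Rcv t then 1 else 0)
     else if t = Suc k then Dv d k n v N Rcv v
     else if t = Suc (Suc k) then SMv d k n v N Rcv u
     else if t = Suc (Suc (Suc k)) then relayv d k n v N Rcv else 0)"

definition Pd :: "real \<Rightarrow> nat \<Rightarrow> nat \<Rightarrow> nat \<Rightarrow> nat set \<Rightarrow> (nat \<Rightarrow> nat \<Rightarrow> nat) \<Rightarrow> (nat \<times> nat) set" where
  "Pd d k n v N Rcv =
     {((c - 1) div n, (c - 1) mod n) | c p. p < n \<and> p \<noteq> v \<and> c = Rcv (Suc (Suc (Suc k))) p \<and> c \<noteq> 0}
   \<union> {(w, c - 1) | w c. w < n \<and> w \<noteq> v \<and> c = Rcv (Suc (Suc k)) w \<and> c \<noteq> 0}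
   \<union> {(v, x) | x. x \<in> N \<inter> knowR d k n v N Rcv}"

definition adjR :: "real \<Rightarrow> nat \<Rightarrow> nat \<Rightarrow> nat \<Rightarrow> nat set \<Rightarrow> (nat \<Rightarrow> nat \<Rightarrow> nat) \<Rightarrow> nat \<Rightarrow> nat \<Rightarrow> bool" where
  "adjR d k n v N Rcv x y \<longleftrightarrow> (x, y) \<in> Pd d k n v N Rcv \<or> (y, x) \<in> Pd d k n v N Rcv"

fun Lp :: "real \<Rightarrow> nat \<Rightarrow> nat \<Rightarrow> nat \<Rightarrow> nat set \<Rightarrow> (nat \<Rightarrow> nat \<Rightarrow> nat) \<Rightarrow> nat \<Rightarrow> nat set" where
  "Lp d k n v N Rcv 0 = knowR d k n v N Rcv"
| "Lp d k n v N Rcv (Suc i) = {x \<in> Lp d k n v N Rcv i.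
      d < real (card {y \<in> Lp d k n v N Rcv i. adjR d k n v N Rcv x y})}"

definition memv :: "real \<Rightarrow> nat \<Rightarrow> nat \<Rightarrow> nat \<Rightarrow> nat set \<Rightarrow> (nat \<Rightarrow> nat \<Rightarrow> nat) \<Rightarrow> nat \<Rightarrow> bool" where
  "memv d k n v N Rcv j = (if j \<le> k then selfA d n N Rcv j else v \<in> Lp d k n v N Rcv (j - k))"

definition Pout :: "real \<Rightarrow> nat \<Rightarrow> nat \<Rightarrow> nat \<Rightarrow> nat set \<Rightarrow> nat \<Rightarrow> (nat \<Rightarrow> nat \<Rightarrow> nat) \<Rightarrow> nat option" where
  "Pout d k n v N t Rcv = (if Suc (Suc (Suc (Suc k))) \<le> t
     then Some (Suc (LEAST i. \<not> memv d k n v N Rcv (Suc i))) else None)"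

lemma SM_nz:
  assumes "SM n E d k w u \<noteq> 0"
  shows "w \<in> Al n E d k \<and> Sg n E d k w \<le> u \<and> u < Sg n E d k w + degR n E d k w \<and>
    SM n E d k w u - 1 \<in> nbr n E w \<inter> Al n E d k \<and> SM n E d k w u \<noteq> 0"
proof -
  have c: "w \<in> Al n E d k" "Sg n E d k w \<le> u" "u < Sg n E d k w + degR n E d k w"
    using assms unfolding SM_def by (auto split: if_splits)
  let ?L = "sorted_list_of_set (nbr n E w \<inter> Al n E d k)"
  have fin: "finite (nbr n E w \<inter> Al n E d k)" using Al_fin by blast
  have "u - Sg n E d k w < length ?L" using c fin unfolding degR_def by simp
  then have "?L ! (u - Sg n E d k w) \<in> set ?L" by simp
  then have "?L ! (u - Sg n E d k w) \<in> nbr n E w \<inter> Al n E d k" using fin by simp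
  then show ?thesis using c assms unfolding SM_def by simp
qed

lemma Sg_Suc: "Sg n E d k (Suc w) = Sg n E d k w + degR n E d k w"
  unfolding Sg_def by simp

lemma Sg_mono: "w \<le> w' \<Longrightarrow> Sg n E d k w \<le> Sg n E d k w'"
  unfolding Sg_def by (rule sum_mono2) auto

lemma SM_uniq:
  assumes "SM n E d k w p \<noteq> 0" "SM n E d k w' p \<noteq> 0"
  shows "w = w'"
proof (rule ccontr)
  assume ne: "w \<noteq> w'"
  have A: "\<And>w w'. w < w' \<Longrightarrow> SM n E d k w p \<noteq> 0 \<Longrightarrow> SM n E d k w' p \<noteq> 0 \<Longrightarrow> False"
  proof -
    fix w w' assume lt: "w < w'" and a: "SM n E d k w p \<noteq> 0" and b: "SM n E d k w' p \<noteq> 0"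
    have "p < Sg n E d k (Suc w)" using SM_nz[OF a] Sg_Suc by simp
    also have "\<dots> \<le> Sg n E d k w'" using lt by (intro Sg_mono) simp
    finally show False using SM_nz[OF b] by simp
  qed
  show False using ne A assms by (metis linorder_neqE_nat)
qed

lemma Mint_bound:
  assumes sg: "simple_graph n E" and n2: "2 \<le> n" and wn: "w < n"
  shows "Mint n E d k j w u < n ^ 3"
proof -
  have n3: "n * n < n ^ 3" using n2 by (simp add: power3_eq_cube)
  have SMb: "\<And>w u. SM n E d k w u \<le> n"
  proof -
    fix w u show "SM n E d k w u \<le> n"
    proof (cases "SM n E d k w u = 0")
      case False
      then have "SM n E d k w u - 1 < n" using SM_nz[OF False] unfolding nbr_def by auto
      then show ?thesis by simp
    qed simp
  qed
  have degb: "degR n E d k w \<le> n"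
  proof -
    have "card (nbr n E w \<inter> Al n E d k) \<le> card {0..<n}"
      by (rule card_mono) (auto simp: nbr_def)
    then show ?thesis unfolding degR_def by simp
  qed
  have relb: "\<And>p. relayval n E d k p \<le> n * n"
  proof -
    fix p
    show "relayval n E d k p \<le> n * n"
    proof (cases "\<exists>w<n. SM n E d k w p \<noteq> 0")
      case True
      define w0 where "w0 = (LEAST w'. w' < n \<and> SM n E d k w' p \<noteq> 0)"
      have "w0 < n \<and> SM n E d k w0 p \<noteq> 0"
        using LeastI_ex[of "\<lambda>w'. w' < n \<and> SM n E d k w' p \<noteq> 0"] True w0_def by blast
      then have w0n: "w0 + 1 \<le> n" by simp
      have "relayval n E d k p = w0 * n + SM n E d k w0 p"
        using True unfolding relayval_def w0_def Let_def by simp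
      also have "\<dots> \<le> w0 * n + n" using SMb by simp
      also have "\<dots> = (w0 + 1) * n" by simp
      also have "\<dots> \<le> n * n" using w0n by (rule mult_right_mono) simp
      finally show ?thesis .
    next
      case False
      then have "relayval n E d k p = 0" unfolding relayval_def by (simp only: if_False)
      then show ?thesis by simp
    qed
  qed
  have "2 * 2 \<le> n * n" by (rule mult_le_mono[OF n2 n2])
  then have n1: "1 < n ^ 3" using n3 by linarith
  have "n \<le> n * n" using n2 by simp
  then have n4: "n < n ^ 3" using n3 by linarith
  show ?thesis unfolding Mint_def
    using n1 n3 n4 degb SMb[of w u] relb[of w] n2 by auto
qed

section \<open>Simulation correctness\<close>

locale sim =
  fixes n :: nat and E :: "nat set set" and d :: real and k :: nat and v :: nat
    and Rcv :: "nat \<Rightarrow> nat \<Rightarrow> nat" and t :: nat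
  assumes sg: "simple_graph n E" and vn: "v < n"
    and stot: "(\<Sum>w<n. degR n E d k w) \<le> n"
    and rcv: "\<And>j w. j < t \<Longrightarrow> w < n \<Longrightarrow> w \<noteq> v \<Longrightarrow> Rcv j w = Mint n E d k j w v"
begin

abbreviation "N \<equiv> nbr n E v"

lemma noloop: "{x, x} \<notin> E"
proof
  assume "{x, x} \<in> E"
  then obtain u w where "{x} = {u, w}" "u \<noteq> w" using sg unfolding simple_graph_def by auto
  then show False by (metis doubleton_eq_iff insert_absorb2)
qed

lemma v_notin_N: "v \<notin> N"
  using noloop unfolding nbr_def by auto

lemma selfA_ok: "i \<le> k \<Longrightarrow> i \<le> t \<Longrightarrow> selfA d n N Rcv i = (v \<in> Al n E d i)"
proof (induction i)
  case 0 then show ?case using vn by simp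
next
  case (Suc i)
  have h: "\<And>u. u \<in> N \<Longrightarrow> Rcv i u = (if u \<in> Al n E d i then 1 else 0)"
  proof -
    fix u assume u: "u \<in> N"
    then have "u \<noteq> v" "u < n" using v_notin_N unfolding nbr_def by auto
    then show "Rcv i u = (if u \<in> Al n E d i then 1 else 0)"
      using rcv[of i u] Suc.prems unfolding Mint_def by simp
  qed
  have eq: "{u \<in> N. u < n \<and> Rcv i u = 1} = nbr n E v \<inter> Al n E d i"
  proof (intro set_eqI iffI)
    fix x assume x: "x \<in> {u \<in> N. u < n \<and> Rcv i u = 1}"
    then have xN: "x \<in> N" by simp
    then have "Rcv i x = (if x \<in> Al n E d i then 1 else 0)" using h by blast
    moreover have "Rcv i x = 1" using x by simp
    ultimately have "x \<in> Al n E d i" by (cases "x \<in> Al n E d i") simp_all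
    then show "x \<in> nbr n E v \<inter> Al n E d i" using xN by simp
  next
    fix x assume x: "x \<in> nbr n E v \<inter> Al n E d i"
    then have xN: "x \<in> N" by simp
    then have "Rcv i x = 1" using h x by simp
    moreover have "x < n" using xN unfolding nbr_def by simp
    ultimately show "x \<in> {u \<in> N. u < n \<and> Rcv i u = 1}" using xN by simp
  qed
  show ?case using Suc eq by simp
qed

lemma knowR_ok: "k < t \<Longrightarrow> knowR d k n v N Rcv = Al n E d k"
proof -
  assume kt: "k < t"
  have s: "selfA d n N Rcv k = (v \<in> Al n E d k)" using selfA_ok kt by simp
  have r: "\<And>u. u < n \<Longrightarrow> u \<noteq> v \<Longrightarrow> Rcv k u = (if u \<in> Al n E d k then 1 else 0)"
    using rcv[of k] kt unfolding Mint_def by simp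
  show ?thesis unfolding knowR_def
  proof (intro set_eqI)
    fix x
    show "x \<in> {u. u < n \<and> (if u = v then selfA d n N Rcv k else Rcv k u = 1)} \<longleftrightarrow> x \<in> Al n E d k"
    proof (cases "x = v")
      case True then show ?thesis using s vn by simp
    next
      case False
      show ?thesis
      proof (cases "x < n")
        case True
        then show ?thesis using r[of x] False by (cases "x \<in> Al n E d k") simp_all
      next
        case xn: False
        then show ?thesis using Al_sub[of n E d k] by auto
      qed
    qed
  qed
qed

lemma N_R: "k < t \<Longrightarrow> N \<inter> knowR d k n v N Rcv = nbr n E v \<inter> Al n E d k"
  using knowR_ok by simp

lemma Dv_self: "k < t \<Longrightarrow> Dv d k n v N Rcv v = degR n E d k v"
  unfolding Dv_def degR_def using selfA_ok[of k] N_R by simp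

lemma Dv_ok: "Suc k < t \<Longrightarrow> w < n \<Longrightarrow> Dv d k n v N Rcv w = degR n E d k w"
proof -
  assume a: "Suc k < t" "w < n"
  show ?thesis
  proof (cases "w = v")
    case True then show ?thesis using Dv_self a by simp
  next
    case False then show ?thesis using rcv[of "Suc k" w] a unfolding Dv_def Mint_def by simp
  qed
qed

lemma Sv_ok: "Suc k < t \<Longrightarrow> Sv d k n v N Rcv = Sg n E d k v"
  unfolding Sv_def Sg_def using Dv_ok vn by (intro sum.cong) auto

lemma SMv_ok: "Suc k < t \<Longrightarrow> SMv d k n v N Rcv u = SM n E d k v u"
proof -
  assume a: "Suc k < t"
  have s: "selfA d n N Rcv k = (v \<in> Al n E d k)" using selfA_ok a by simp
  show ?thesis unfolding SMv_def SM_def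
    using s Sv_ok[OF a] Dv_self a N_R by simp
qed

lemma relay_ok: "Suc (Suc k) < t \<Longrightarrow> relayv d k n v N Rcv = relayval n E d k v"
proof -
  assume a: "Suc (Suc k) < t"
  have r: "\<And>w. w < n \<Longrightarrow> w \<noteq> v \<Longrightarrow> Rcv (Suc (Suc k)) w = SM n E d k w v"
    using rcv a unfolding Mint_def by simp
  have sv: "SMv d k n v N Rcv v = SM n E d k v v" using SMv_ok a by simp
  show ?thesis
  proof (cases "\<exists>w<n. SM n E d k w v \<noteq> 0")
    case True
    then obtain w0 where w0: "w0 < n" "SM n E d k w0 v \<noteq> 0" by blast
    have un: "\<And>w. SM n E d k w v \<noteq> 0 \<Longrightarrow> w = w0" using SM_uniq w0(2) by blast
    have L1: "(LEAST w. w < n \<and> SM n E d k w v \<noteq> 0) = w0"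
    proof (rule Least_equality)
      show "w0 < n \<and> SM n E d k w0 v \<noteq> 0" using w0 by blast
      fix y assume "y < n \<and> SM n E d k y v \<noteq> 0"
      then have "y = w0" using un by blast
      then show "w0 \<le> y" by simp
    qed
    have rv: "relayval n E d k v = w0 * n + SM n E d k w0 v"
      unfolding relayval_def Let_def L1 using True by (simp only: if_True)
    show ?thesis
    proof (cases "w0 = v")
      case False
      have rw0: "Rcv (Suc (Suc k)) w0 = SM n E d k w0 v" using r w0(1) False by blast
      have ex: "\<exists>w<n. w \<noteq> v \<and> Rcv (Suc (Suc k)) w \<noteq> 0" using w0 False rw0 by auto
      have L2: "(LEAST w. w < n \<and> w \<noteq> v \<and> Rcv (Suc (Suc k)) w \<noteq> 0) = w0"
      proof (rule Least_equality)
        show "w0 < n \<and> w0 \<noteq> v \<and> Rcv (Suc (Suc k)) w0 \<noteq> 0" using w0 False rw0 by simp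
        fix y assume y: "y < n \<and> y \<noteq> v \<and> Rcv (Suc (Suc k)) y \<noteq> 0"
        then have "SM n E d k y v \<noteq> 0" using r by metis
        then have "y = w0" using un by blast
        then show "w0 \<le> y" by simp
      qed
      have "relayv d k n v N Rcv = w0 * n + Rcv (Suc (Suc k)) w0"
        unfolding relayv_def Let_def L2 using ex by (simp only: if_True)
      then show ?thesis using rv rw0 by simp
    next
      case True
      have nex: "\<not> (\<exists>w<n. w \<noteq> v \<and> Rcv (Suc (Suc k)) w \<noteq> 0)"
      proof
        assume "\<exists>w<n. w \<noteq> v \<and> Rcv (Suc (Suc k)) w \<noteq> 0"
        then obtain w where w: "w < n" "w \<noteq> v" "Rcv (Suc (Suc k)) w \<noteq> 0" by blast
        then have "SM n E d k w v \<noteq> 0" using r by metis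
        then have "w = w0" using un by blast
        then show False using w True by simp
      qed
      have "SMv d k n v N Rcv v \<noteq> 0" using sv True w0 by simp
      then have "relayv d k n v N Rcv = v * n + SMv d k n v N Rcv v"
        unfolding relayv_def using nex by (simp only: if_False if_True not_False_eq_True)
      then show ?thesis using rv sv True by simp
    qed
  next
    case False
    have nex: "\<not> (\<exists>w<n. w \<noteq> v \<and> Rcv (Suc (Suc k)) w \<noteq> 0)"
    proof
      assume "\<exists>w<n. w \<noteq> v \<and> Rcv (Suc (Suc k)) w \<noteq> 0"
      then obtain w where w: "w < n" "w \<noteq> v" "Rcv (Suc (Suc k)) w \<noteq> 0" by blast
      then have "SM n E d k w v \<noteq> 0" using r by metis
      then show False using False w by blast
    qed
    have z: "SMv d k n v N Rcv v = 0" using sv False vn by simp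
    have "relayv d k n v N Rcv = 0" unfolding relayv_def by (simp only: nex z if_False, simp)
    moreover have "relayval n E d k v = 0" unfolding relayval_def using False by (simp only: if_False)
    ultimately show ?thesis by simp
  qed
qed

lemma msg_ok: "Pmsg d k n v N t Rcv u = Mint n E d k t v u"
proof -
  consider "t \<le> k" | "t = Suc k" | "t = Suc (Suc k)" | "t = Suc (Suc (Suc k))"
    | "Suc (Suc (Suc k)) < t" by linarith
  then show ?thesis
  proof cases
    case 1 then show ?thesis unfolding Pmsg_def Mint_def using selfA_ok[of t] by simp
  next
    case 2 then show ?thesis unfolding Pmsg_def Mint_def using Dv_self by simp
  next
    case 3 then show ?thesis unfolding Pmsg_def Mint_def using SMv_ok by simp
  next
    case 4 then show ?thesis unfolding Pmsg_def Mint_def using relay_ok by simp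
  next
    case 5 then show ?thesis unfolding Pmsg_def Mint_def by simp
  qed
qed

lemma relay_dec:
  assumes c: "relayval n E d k p \<noteq> 0"
  shows "\<exists>w y. w < n \<and> relayval n E d k p = w * n + Suc y \<and> SM n E d k w p = Suc y \<and> y \<in> nbr n E w \<inter> Al n E d k"
proof -
  have ex: "\<exists>w<n. SM n E d k w p \<noteq> 0" using c unfolding relayval_def by (auto split: if_splits)
  define w0 where "w0 = (LEAST w'. w' < n \<and> SM n E d k w' p \<noteq> 0)"
  have w0: "w0 < n \<and> SM n E d k w0 p \<noteq> 0"
    using LeastI_ex[of "\<lambda>w'. w' < n \<and> SM n E d k w' p \<noteq> 0"] ex w0_def by blast
  have rv: "relayval n E d k p = w0 * n + SM n E d k w0 p"
    using ex unfolding relayval_def w0_def Let_def by simp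
  obtain y where y: "SM n E d k w0 p = Suc y" using w0 by (metis not0_implies_Suc)
  have "y \<in> nbr n E w0 \<inter> Al n E d k" using SM_nz[of n E d k w0 p] w0 y by simp
  then show ?thesis by (intro exI[of _ w0] exI[of _ y]) (use rv y w0 in auto)
qed

lemma dec_pair: "y < n \<Longrightarrow> (w * n + Suc y - 1) div n = w \<and> (w * n + Suc y - 1) mod n = y"
  by simp

lemma Pd_sound:
  assumes a: "Suc (Suc (Suc k)) < t" and xy: "(x, y) \<in> Pd d k n v N Rcv"
  shows "{y, x} \<in> E"
proof -
  have r2: "\<And>w. w < n \<Longrightarrow> w \<noteq> v \<Longrightarrow> Rcv (Suc (Suc k)) w = SM n E d k w v"
    using rcv a unfolding Mint_def by simp
  have r3: "\<And>w. w < n \<Longrightarrow> w \<noteq> v \<Longrightarrow> Rcv (Suc (Suc (Suc k))) w = relayval n E d k w"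
    using rcv a unfolding Mint_def by simp
  from xy consider
    (c1) c p where "p < n" "p \<noteq> v" "c = Rcv (Suc (Suc (Suc k))) p" "c \<noteq> 0" "x = (c - 1) div n" "y = (c - 1) mod n"
  | (c2) c where "x < n" "x \<noteq> v" "c = Rcv (Suc (Suc k)) x" "c \<noteq> 0" "y = c - 1"
  | (c3) "x = v" "y \<in> N \<inter> knowR d k n v N Rcv"
    unfolding Pd_def by blast
  then show ?thesis
  proof cases
    case c1
    then have "relayval n E d k p \<noteq> 0" using r3 by simp
    then obtain w y0 where w: "w < n" "relayval n E d k p = w * n + Suc y0"
      "y0 \<in> nbr n E w \<inter> Al n E d k" using relay_dec by blast
    have y0n: "y0 < n" using w unfolding nbr_def by simp
    have "x = w" "y = y0" using c1 r3 w dec_pair[OF y0n, of w] by simp_all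
    then show ?thesis using w unfolding nbr_def by simp
  next
    case c2
    then have "SM n E d k x v \<noteq> 0" using r2 by simp
    then have "SM n E d k x v - 1 \<in> nbr n E x" using SM_nz by blast
    then show ?thesis using c2 r2 unfolding nbr_def by simp
  next
    case c3
    then show ?thesis unfolding nbr_def by simp
  qed
qed

lemma Pd_complete:
  assumes a: "Suc (Suc (Suc k)) < t" and x: "x \<in> Al n E d k" and y: "y \<in> Al n E d k"
    and e: "{x, y} \<in> E"
  shows "(x, y) \<in> Pd d k n v N Rcv \<or> (y, x) \<in> Pd d k n v N Rcv"
proof -
  have kt: "k < t" using a by simp
  have r2: "\<And>w. w < n \<Longrightarrow> w \<noteq> v \<Longrightarrow> Rcv (Suc (Suc k)) w = SM n E d k w v"
    using rcv a unfolding Mint_def by simp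
  have r3: "\<And>w. w < n \<Longrightarrow> w \<noteq> v \<Longrightarrow> Rcv (Suc (Suc (Suc k))) w = relayval n E d k w"
    using rcv a unfolding Mint_def by simp
  have xn: "x < n" and yn: "y < n" using x y Al_sub[of n E d k] by auto
  show ?thesis
  proof (cases "x = v")
    case True
    have "y \<in> N \<inter> knowR d k n v N Rcv" using N_R[OF kt] y yn e True unfolding nbr_def
      by (simp add: insert_commute)
    then show ?thesis using True unfolding Pd_def by blast
  next
    case xv: False
    show ?thesis
    proof (cases "y = v")
      case True
      have "x \<in> N \<inter> knowR d k n v N Rcv" using N_R[OF kt] x xn e True unfolding nbr_def
        by simp
      then show ?thesis using True unfolding Pd_def by blast
    next
      case yv: False
      let ?S = "nbr n E x \<inter> Al n E d k"
      let ?L = "sorted_list_of_set ?S"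
      have fin: "finite ?S" using Al_fin by blast
      have yS: "y \<in> set ?L" using fin y yn e unfolding nbr_def by (simp add: insert_commute)
      then obtain idx where idx: "idx < length ?L" "?L ! idx = y" by (metis in_set_conv_nth)
      have dx: "degR n E d k x = length ?L" using x fin unfolding degR_def by simp
      define p where "p = Sg n E d k x + idx"
      have SMp: "SM n E d k x p = Suc y" using x idx dx unfolding SM_def p_def by simp
      have "p < Sg n E d k (Suc x)" using idx dx Sg_Suc unfolding p_def by simp
      also have "\<dots> \<le> Sg n E d k n" using xn by (intro Sg_mono) simp
      also have "\<dots> \<le> n" using stot unfolding Sg_def .
      finally have pn: "p < n" .
      show ?thesis
      proof (cases "p = v")
        case True
        have "Rcv (Suc (Suc k)) x = Suc y" using r2[OF xn xv] SMp True by simp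
        then have "(x, y) \<in> {(w, c - 1) | w c. w < n \<and> w \<noteq> v \<and> c = Rcv (Suc (Suc k)) w \<and> c \<noteq> 0}"
          using xn xv by force
        then show ?thesis unfolding Pd_def by blast
      next
        case pv: False
        have un: "\<And>w. SM n E d k w p \<noteq> 0 \<Longrightarrow> w = x" using SM_uniq SMp by (metis nat.distinct(1))
        have ex: "\<exists>w<n. SM n E d k w p \<noteq> 0" using xn SMp by auto
        have L1: "(LEAST w. w < n \<and> SM n E d k w p \<noteq> 0) = x"
        proof (rule Least_equality)
          show "x < n \<and> SM n E d k x p \<noteq> 0" using xn SMp by simp
          fix z assume "z < n \<and> SM n E d k z p \<noteq> 0"
          then have "z = x" using un by blast
          then show "x \<le> z" by simp
        qed
        have rv: "relayval n E d k p = x * n + Suc y"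
          unfolding relayval_def Let_def L1 using ex SMp by simp
        have c: "Rcv (Suc (Suc (Suc k))) p = x * n + Suc y" using r3[OF pn pv] rv by simp
        have "(x, y) = ((x * n + Suc y - 1) div n, (x * n + Suc y - 1) mod n)"
          using dec_pair[OF yn] by simp
        then have "(x, y) \<in> {((c - 1) div n, (c - 1) mod n) | c p. p < n \<and> p \<noteq> v \<and> c = Rcv (Suc (Suc (Suc k))) p \<and> c \<noteq> 0}"
          using pn pv c by force
        then show ?thesis unfolding Pd_def by blast
      qed
    qed
  qed
qed

lemma adj_ok:
  assumes a: "Suc (Suc (Suc k)) < t" and x: "x \<in> Al n E d k" and y: "y \<in> Al n E d k"
  shows "adjR d k n v N Rcv x y \<longleftrightarrow> {x, y} \<in> E"
  unfolding adjR_def using Pd_sound[OF a] Pd_complete[OF a x y]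
  by (metis insert_commute)

lemma Lp_ok:
  assumes a: "Suc (Suc (Suc k)) < t"
  shows "Lp d k n v N Rcv i = Al n E d (k + i)"
proof (induction i)
  case 0 then show ?case using knowR_ok a by simp
next
  case (Suc i)
  have sub: "Al n E d (k + i) \<subseteq> Al n E d k" by (rule Al_anti) simp
  have eq: "\<And>x. x \<in> Al n E d (k + i) \<Longrightarrow>
     {y \<in> Al n E d (k + i). adjR d k n v N Rcv x y} = nbr n E x \<inter> Al n E d (k + i)"
  proof -
    fix x assume x: "x \<in> Al n E d (k + i)"
    show "{y \<in> Al n E d (k + i). adjR d k n v N Rcv x y} = nbr n E x \<inter> Al n E d (k + i)"
    proof (intro set_eqI)
      fix y
      show "y \<in> {y \<in> Al n E d (k + i). adjR d k n v N Rcv x y} \<longleftrightarrow> y \<in> nbr n E x \<inter> Al n E d (k + i)"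
      proof (cases "y \<in> Al n E d (k + i)")
        case True
        then have "adjR d k n v N Rcv x y \<longleftrightarrow> {x, y} \<in> E"
          using adj_ok[OF a] x sub by blast
        moreover have "y < n" using True Al_sub[of n E d "k + i"] by auto
        ultimately show ?thesis using True by (simp add: nbr_def insert_commute)
      next
        case False then show ?thesis by simp
      qed
    qed
  qed
  show ?case using Suc eq by auto
qed

lemma memv_ok:
  assumes a: "Suc (Suc (Suc k)) < t"
  shows "memv d k n v N Rcv j = (v \<in> Al n E d j)"
  unfolding memv_def using selfA_ok[of j] a Lp_ok[OF a, of "j - k"] by auto

lemma Pout_ok:
  shows "Pout d k n v N t Rcv = (if Suc (Suc (Suc (Suc k))) \<le> t then Some (hlev n E d v) else None)"
proof (cases "Suc (Suc (Suc (Suc k))) \<le> t")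
  case True
  then have a: "Suc (Suc (Suc k)) < t" by simp
  show ?thesis unfolding Pout_def hlev_def using True memv_ok[OF a] by simp
next
  case False then show ?thesis unfolding Pout_def by simp
qed

end




definition enc :: "nat \<Rightarrow> nat \<Rightarrow> nat \<Rightarrow> nat set \<Rightarrow> nat \<Rightarrow> (nat \<Rightarrow> nat \<Rightarrow> nat) \<Rightarrow> nat list" where
  "enc n a v N t R = [n, a, v, t] @ map (\<lambda>u. if u \<in> N then 1 else 0) [0..<n]
     @ concat (map (\<lambda>j. map (R j) [0..<n]) [0..<t])"

definition dN :: "nat list \<Rightarrow> nat set" where
  "dN s = {u. u < s ! 0 \<and> s ! (4 + u) = 1}"

definition dR :: "nat list \<Rightarrow> nat \<Rightarrow> nat \<Rightarrow> nat" where
  "dR s j w = (if j < s ! 3 \<and> w < s ! 0 then s ! (4 + s ! 0 + j * s ! 0 + w) else 0)"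

definition ddv :: "real \<Rightarrow> nat \<Rightarrow> real" where
  "ddv eps a = (2 + eps) * real a"

definition kk :: "real \<Rightarrow> nat \<Rightarrow> nat" where
  "kk eps a = nat \<lceil>log ((2 + eps) / 2) (2 * real a)\<rceil>"

definition Alg :: "real \<Rightarrow> cc_alg" where
  "Alg eps = CCAlg (\<lambda>n a v N. enc n a v N 0 (\<lambda>_ _. 0))
     (\<lambda>s u. let raw = Pmsg (ddv eps (s ! 1)) (kk eps (s ! 1)) (s ! 0) (s ! 2) (dN s) (s ! 3) (dR s) u
            in if raw < (s ! 0) ^ 3 then raw else 0)
     (\<lambda>s r. s[3 := Suc (s ! 3)] @ map r [0..<s ! 0])
     (\<lambda>s. Pout (ddv eps (s ! 1)) (kk eps (s ! 1)) (s ! 0) (s ! 2) (dN s) (s ! 3) (dR s))"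

lemma concat_nth:
  assumes "\<And>j. length (f j) = n" and "j < t" and "w < n"
  shows "concat (map f [0..<t]) ! (j * n + w) = f j ! w"
  using assms(2)
proof (induction t)
  case 0 then show ?case by simp
next
  case (Suc t)
  have len: "length (concat (map f [0..<t])) = t * n"
    using assms(1) by (induction t) auto
  show ?case
  proof (cases "j < t")
    case True
    have "j * n + w < t * n"
    proof -
      have "j * n + w < j * n + n" using assms(3) by simp
      also have "\<dots> = Suc j * n" by simp
      also have "\<dots> \<le> t * n" using True by (intro mult_right_mono) auto
      finally show ?thesis .
    qed
    then show ?thesis using Suc True len by (simp add: nth_append)
  next
    case False
    then have "j = t" using Suc by simp
    then show ?thesis using len by (simp add: nth_append)
  qed
qed

lemma enc_len: "length (enc n a v N t R) = 4 + n + t * n"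
proof -
  have "length (concat (map (\<lambda>j. map (R j) [0..<n]) [0..<t])) = t * n"
    by (induction t) auto
  then show ?thesis unfolding enc_def by simp
qed

lemma enc_Suc: "enc n a v N (Suc t) R = (enc n a v N t R)[3 := Suc t] @ map (R t) [0..<n]"
  unfolding enc_def by simp

lemma enc_nth:
  "enc n a v N t R ! 0 = n" "enc n a v N t R ! 1 = a" "enc n a v N t R ! 2 = v"
  "enc n a v N t R ! 3 = t"
  unfolding enc_def by simp_all

lemma enc_nth':
  "enc n a v N t R ! Suc 0 = a" "enc n a v N t R ! Suc (Suc 0) = v"
  "enc n a v N t R ! Suc (Suc (Suc 0)) = t"
  unfolding enc_def by simp_all

lemma enc_dN: "dN (enc n a v N t R) = {u. u < n \<and> u \<in> N}"
proof -
  have "\<And>u. u < n \<Longrightarrow> enc n a v N t R ! (4 + u) = (if u \<in> N then 1 else 0)"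
    unfolding enc_def by (simp add: nth_append)
  then show ?thesis unfolding dN_def enc_nth
  proof (intro set_eqI)
    fix x assume h: "\<And>u. u < n \<Longrightarrow> enc n a v N t R ! (4 + u) = (if u \<in> N then 1 else 0)"
    show "x \<in> {u. u < n \<and> enc n a v N t R ! (4 + u) = 1} \<longleftrightarrow> x \<in> {u. u < n \<and> u \<in> N}"
    proof (cases "x < n")
      case True
      then show ?thesis using h[OF True] by (cases "x \<in> N") simp_all
    qed simp
  qed
qed

lemma enc_dR: "dR (enc n a v N t R) j w = (if j < t \<and> w < n then R j w else 0)"
proof (cases "j < t \<and> w < n")
  case True
  have "enc n a v N t R ! (4 + n + j * n + w) =
        concat (map (\<lambda>j. map (R j) [0..<n]) [0..<t]) ! (j * n + w)"
    unfolding enc_def by (simp add: nth_append add.assoc)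
  also have "\<dots> = R j w" using concat_nth[of "\<lambda>j. map (R j) [0..<n]" n j t w] True by simp
  finally show ?thesis unfolding dR_def enc_nth using True by simp
next
  case False then show ?thesis unfolding dR_def enc_nth by auto
qed

lemma run_eq:
  "cc_run (Alg eps) n a E t v = enc n a v {u. {u, v} \<in> E} t
     (\<lambda>j w. if w < n \<and> w \<noteq> v then cc_msg (Alg eps) (cc_run (Alg eps) n a E j w) v else 0)"
proof (induction t)
  case 0 then show ?case by (simp add: Alg_def enc_def)
next
  case (Suc t)
  show ?case
    by (simp only: cc_run.simps Suc) (simp add: Alg_def enc_Suc enc_nth)
qed

lemma msg_raw:
  "cc_msg (Alg eps) (cc_run (Alg eps) n a E t v) u =
    (let raw = Pmsg (ddv eps a) (kk eps a) n v (nbr n E v) t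
        (\<lambda>j w. if j < t \<and> w < n then (if w < n \<and> w \<noteq> v then cc_msg (Alg eps) (cc_run (Alg eps) n a E j w) v else 0) else 0) u
     in if raw < n ^ 3 then raw else 0)"
proof -
  have dn: "{u. u < n \<and> u \<in> {u. {u, v} \<in> E}} = nbr n E v" "{u. u < n \<and> {u, v} \<in> E} = nbr n E v" unfolding nbr_def by auto
  show ?thesis
    by (subst run_eq) (simp add: Alg_def enc_nth enc_nth' dn enc_dR[abs_def] enc_dN del: cc_run.simps)
qed

lemma out_raw:
  "cc_out (Alg eps) (cc_run (Alg eps) n a E t v) =
    Pout (ddv eps a) (kk eps a) n v (nbr n E v) t
        (\<lambda>j w. if j < t \<and> w < n then (if w < n \<and> w \<noteq> v then cc_msg (Alg eps) (cc_run (Alg eps) n a E j w) v else 0) else 0)"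
proof -
  have dn: "{u. u < n \<and> u \<in> {u. {u, v} \<in> E}} = nbr n E v" "{u. u < n \<and> {u, v} \<in> E} = nbr n E v" unfolding nbr_def by auto
  show ?thesis
    by (subst run_eq) (simp add: Alg_def enc_nth enc_nth' dn enc_dR[abs_def] enc_dN del: cc_run.simps)
qed

lemma msg_correct:
  assumes sg: "simple_graph n E" and n2: "2 \<le> n"
    and stot: "(\<Sum>w<n. degR n E (ddv eps a) (kk eps a) w) \<le> n"
  shows "w < n \<Longrightarrow> u < n \<Longrightarrow> u \<noteq> w \<Longrightarrow>
    cc_msg (Alg eps) (cc_run (Alg eps) n a E j w) u = Mint n E (ddv eps a) (kk eps a) j w u"
proof (induction j arbitrary: w u rule: less_induct)
  case (less j)
  let ?Rcv = "\<lambda>j' w'. if j' < j \<and> w' < n then (if w' < n \<and> w' \<noteq> w then cc_msg (Alg eps) (cc_run (Alg eps) n a E j' w') w else 0) else 0"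
  interpret sim n E "ddv eps a" "kk eps a" w ?Rcv j
  proof
    show "simple_graph n E" by (rule sg)
    show "w < n" by (rule less.prems(1))
    show "(\<Sum>w<n. degR n E (ddv eps a) (kk eps a) w) \<le> n" by (rule stot)
    fix j' w' assume a: "j' < j" "w' < n" "w' \<noteq> w"
    show "?Rcv j' w' = Mint n E (ddv eps a) (kk eps a) j' w' w"
      using a less.IH[of j' w' w] less.prems by simp
  qed
  have "Pmsg (ddv eps a) (kk eps a) n w (nbr n E w) j ?Rcv u = Mint n E (ddv eps a) (kk eps a) j w u"
    by (rule msg_ok)
  moreover have "Mint n E (ddv eps a) (kk eps a) j w u < n ^ 3"
    by (rule Mint_bound[OF sg n2 less.prems(1)])
  ultimately show ?case by (simp add: msg_raw Let_def)
qed

lemma out_correct: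
  assumes sg: "simple_graph n E" and n2: "2 \<le> n"
    and stot: "(\<Sum>w<n. degR n E (ddv eps a) (kk eps a) w) \<le> n" and vn: "v < n"
  shows "cc_out (Alg eps) (cc_run (Alg eps) n a E t v) =
    (if Suc (Suc (Suc (Suc (kk eps a)))) \<le> t then Some (hlev n E (ddv eps a) v) else None)"
proof -
  let ?Rcv = "\<lambda>j' w'. if j' < t \<and> w' < n then (if w' < n \<and> w' \<noteq> v then cc_msg (Alg eps) (cc_run (Alg eps) n a E j' w') v else 0) else 0"
  interpret sim n E "ddv eps a" "kk eps a" v ?Rcv t
  proof
    show "simple_graph n E" by (rule sg)
    show "v < n" by (rule vn)
    show "(\<Sum>w<n. degR n E (ddv eps a) (kk eps a) w) \<le> n" by (rule stot)
    fix j' w' assume a: "j' < t" "w' < n" "w' \<noteq> v"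
    show "?Rcv j' w' = Mint n E (ddv eps a) (kk eps a) j' w' v"
      using a msg_correct[OF sg n2 stot, of w' v j'] vn by simp
  qed
  show ?thesis using Pout_ok by (simp add: out_raw)
qed




lemma ceil_ge: "y \<le> real (nat \<lceil>y\<rceil>)"
proof (cases "0 \<le> \<lceil>y\<rceil>")
  case True
  then have "real (nat \<lceil>y\<rceil>) = real_of_int \<lceil>y\<rceil>" by simp
  then show ?thesis using le_of_int_ceiling[of y] by linarith
next
  case False
  then have "y < 0" by linarith
  then show ?thesis by simp
qed

lemma ceil_le: "0 \<le> y \<Longrightarrow> real (nat \<lceil>y\<rceil>) \<le> y + 1"
  by linarith

lemma pow_ge:
  assumes b: "1 < b" and x: "0 < x"
  shows "x \<le> b ^ nat \<lceil>log b x\<rceil>"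
proof -
  have "x = b powr (log b x)" using b x by simp
  also have "\<dots> \<le> b powr real (nat \<lceil>log b x\<rceil>)"
    by (rule powr_mono) (use b ceil_ge in auto)
  also have "\<dots> = b ^ nat \<lceil>log b x\<rceil>" using b by (simp add: powr_realpow)
  finally show ?thesis .
qed

lemma H_cong:
  assumes "\<And>v. v < n \<Longrightarrow> h v = h' v"
  shows "is_H_partition n E A l h = is_H_partition n E A l h'"
proof -
  have "\<And>v. v < n \<Longrightarrow> {u. u < n \<and> {u, v} \<in> E \<and> h u \<ge> h v} = {u. u < n \<and> {u, v} \<in> E \<and> h' u \<ge> h' v}"
    using assms by auto
  then show ?thesis unfolding is_H_partition_def using assms by auto
qed

lemma stot_ok:
  assumes sg: "simple_graph n E" and arb: "arboricity E = a" and a0: "0 < a" and e0: "0 < eps"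
  shows "(\<Sum>w<n. degR n E (ddv eps a) (kk eps a) w) \<le> n"
proof -
  let ?d = "ddv eps a" and ?k = "kk eps a"
  let ?S = "Al n E ?d ?k"
  define b where "b = (2 + eps) / 2"
  have b1: "1 < b" using e0 b_def by simp
  have "(\<Sum>w<n. degR n E ?d ?k w) = (\<Sum>w\<in>{w\<in>{..<n}. w \<in> ?S}. card (nbr n E w \<inter> ?S))"
    unfolding degR_def by (rule sum.inter_filter[symmetric]) simp
  also have "{w\<in>{..<n}. w \<in> ?S} = ?S" using Al_sub[of n E ?d ?k] by auto
  also have "(\<Sum>w\<in>?S. card (nbr n E w \<inter> ?S)) = (\<Sum>w\<in>?S. card {u\<in>?S. {u,w} \<in> E})"
    by (rule sum.cong) (use Al_sub[of n E ?d ?k] in \<open>auto simp: nbr_def intro!: arg_cong[where f=card]\<close>)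
  also have "\<dots> \<le> 2 * card {e\<in>E. e \<subseteq> ?S}" by (rule deg_sum[OF sg Al_fin])
  also have "\<dots> \<le> 2 * (a * card ?S)" using arb_density[OF sg arb Al_fin[of n E ?d ?k]] by simp
  finally have s0: "real (\<Sum>w<n. degR n E ?d ?k w) \<le> real (2 * (a * card ?S))"
    by (simp only: of_nat_le_iff)
  then have s1: "real (\<Sum>w<n. degR n E ?d ?k w) \<le> 2 * real a * real (card ?S)"
    by simp
  have cS: "real (card ?S) \<le> (2 / (2 + eps)) ^ ?k * real n"
    by (rule card_Al[OF sg arb _ a0 e0]) (simp add: ddv_def)
  have bk: "2 * real a \<le> b ^ ?k"
    unfolding kk_def b_def[symmetric] by (rule pow_ge[OF b1]) (use a0 in simp)
  have q: "(2 / (2 + eps)) ^ ?k = 1 / b ^ ?k" unfolding b_def by (simp add: power_divide)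
  have bkpos: "0 < b ^ ?k" using b1 by simp
  have "2 * real a * real (card ?S) \<le> 2 * real a * ((1 / b ^ ?k) * real n)"
    using cS q by (intro mult_left_mono) auto
  also have "\<dots> = (2 * real a / b ^ ?k) * real n" by simp
  also have "\<dots> \<le> 1 * real n"
    by (rule mult_right_mono) (use bk bkpos in \<open>simp_all add: divide_le_eq\<close>)
  finally have "2 * real a * real (card ?S) \<le> 1 * real n" .
  then have "real (\<Sum>w<n. degR n E ?d ?k w) \<le> real n" using s1 by linarith
  then show ?thesis by (simp only: of_nat_le_iff)
qed

lemma Al_empty:
  assumes sg: "simple_graph n E" and arb: "arboricity E = a" and a0: "0 < a" and e0: "0 < eps"
    and n0: "0 < n"
  shows "Al n E (ddv eps a) (nat \<lceil>log ((2 + eps) / 2) (real n)\<rceil> + 1) = {}"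
proof -
  define b where "b = (2 + eps) / 2"
  define l where "l = nat \<lceil>log b (real n)\<rceil> + 1"
  have b1: "1 < b" using e0 b_def by simp
  have cS: "real (card (Al n E (ddv eps a) l)) \<le> (2 / (2 + eps)) ^ l * real n"
    by (rule card_Al[OF sg arb _ a0 e0]) (simp add: ddv_def)
  have bm: "real n \<le> b ^ nat \<lceil>log b (real n)\<rceil>" by (rule pow_ge[OF b1]) (use n0 in simp)
  have bl: "b ^ l = b ^ nat \<lceil>log b (real n)\<rceil> * b" unfolding l_def by simp
  have "real n * b > real n" using b1 n0 by simp
  then have nbl: "real n < b ^ l" using bm bl b1
    by (smt (verit) mult_right_mono)
  have q: "(2 / (2 + eps)) ^ l = 1 / b ^ l" unfolding b_def by (simp add: power_divide)
  have bpos: "0 < b ^ l" using b1 by simp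
  have "real n / b ^ l < 1" using nbl bpos by (simp add: divide_less_eq)
  moreover have "real (card (Al n E (ddv eps a) l)) \<le> real n / b ^ l" using cS q by simp
  ultimately have "real (card (Al n E (ddv eps a) l)) < 1" by linarith
  then have "card (Al n E (ddv eps a) l) = 0" by simp
  then show ?thesis using Al_fin l_def b_def by auto
qed

lemma n_ge2:
  assumes sg: "simple_graph n E" and arb: "arboricity E = a" and a2: "2 \<le> a"
  shows "2 \<le> n"
proof (rule ccontr)
  assume "\<not> 2 \<le> n"
  then have "E = {}" using sg unfolding simple_graph_def by fastforce
  then have "arboricity E = 0" unfolding arboricity_def
    by (intro Least_eq_0) (rule exI[of _ "\<lambda>_. {}"], simp)
  then show False using arb a2 by simp
qed

theorem theorem1:
  shows "\<forall>\<epsilon>::real. 0 < \<epsilon> \<and> \<epsilon> \<le> 2 \<longrightarrow>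
    (\<exists>(Alg :: cc_alg) (C :: real) (B :: nat).
      \<forall>(n :: nat) (E :: nat set set) (a :: nat).
        simple_graph n E \<and> arboricity E = a \<and> a \<ge> 2 \<longrightarrow>
          \<comment> \<open>messages have O(log n) bits\<close>
          (\<forall>t u v. u < n \<and> v < n \<and> u \<noteq> v \<longrightarrow> cc_msg Alg (cc_run Alg n a E t u) v < n ^ B) \<and>
          \<comment> \<open>outputs, once produced, are final\<close>
          (\<forall>t t' v i. v < n \<and> t \<le> t' \<and> cc_out Alg (cc_run Alg n a E t v) = Some i \<longrightarrow>
              cc_out Alg (cc_run Alg n a E t' v) = Some i) \<and>
          \<comment> \<open>after T = O(log a) rounds every vertex knows its index in an H-partition\<close>
          (\<exists>T :: nat. real T \<le> C * log 2 (real a) \<and>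
             (\<forall>v<n. cc_out Alg (cc_run Alg n a E T v) \<noteq> None) \<and>
             (\<exists>l :: nat. real l \<le> C * log 2 (real n) \<and>
                is_H_partition n E ((2 + \<epsilon>) * real a) l
                  (\<lambda>v. the (cc_out Alg (cc_run Alg n a E T v))))))"
proof (intro allI impI)
  fix eps :: real assume eps: "0 < eps \<and> eps \<le> 2"
  then have e0: "0 < eps" by simp
  define b where "b = (2 + eps) / 2"
  have b1: "1 < b" using e0 b_def by simp
  have lb: "0 < ln b" using b1 by simp
  have l2: "0 < ln (2::real)" by simp
  define C where "C = 2 * ln 2 / ln b + 5"
  show "\<exists>(Alg :: cc_alg) (C :: real) (B :: nat).
      \<forall>(n :: nat) (E :: nat set set) (a :: nat).
        simple_graph n E \<and> arboricity E = a \<and> a \<ge> 2 \<longrightarrow>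
          (\<forall>t u v. u < n \<and> v < n \<and> u \<noteq> v \<longrightarrow> cc_msg Alg (cc_run Alg n a E t u) v < n ^ B) \<and>
          (\<forall>t t' v i. v < n \<and> t \<le> t' \<and> cc_out Alg (cc_run Alg n a E t v) = Some i \<longrightarrow>
              cc_out Alg (cc_run Alg n a E t' v) = Some i) \<and>
          (\<exists>T :: nat. real T \<le> C * log 2 (real a) \<and>
             (\<forall>v<n. cc_out Alg (cc_run Alg n a E T v) \<noteq> None) \<and>
             (\<exists>l :: nat. real l \<le> C * log 2 (real n) \<and>
                is_H_partition n E ((2 + eps) * real a) l
                  (\<lambda>v. the (cc_out Alg (cc_run Alg n a E T v)))))"
  proof (intro exI[of _ "Alg eps"] exI[of _ C] exI[of _ "3::nat"] allI impI)
    fix n E a assume H: "simple_graph n E \<and> arboricity E = a \<and> 2 \<le> a"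
    then have sg: "simple_graph n E" and arb: "arboricity E = a" and a2: "2 \<le> a" by auto
    have a0: "0 < a" using a2 by simp
    have n2: "2 \<le> n" by (rule n_ge2[OF sg arb a2])
    have stot: "(\<Sum>w<n. degR n E (ddv eps a) (kk eps a) w) \<le> n" by (rule stot_ok[OF sg arb a0 e0])
    have oc: "\<And>v t. v < n \<Longrightarrow> cc_out (Alg eps) (cc_run (Alg eps) n a E t v) =
      (if Suc (Suc (Suc (Suc (kk eps a)))) \<le> t then Some (hlev n E (ddv eps a) v) else None)"
      by (rule out_correct[OF sg n2 stot])
    have msgb: "\<forall>t u v. u < n \<and> v < n \<and> u \<noteq> v \<longrightarrow> cc_msg (Alg eps) (cc_run (Alg eps) n a E t u) v < n ^ 3"
    proof (intro allI impI)
      fix t u v assume "u < n \<and> v < n \<and> u \<noteq> v"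
      have "0 < n ^ 3" using n2 by simp
      then show "cc_msg (Alg eps) (cc_run (Alg eps) n a E t u) v < n ^ 3"
        by (subst msg_raw) (simp only: Let_def, simp del: cc_run.simps)
    qed
    have finl: "\<forall>t t' v i. v < n \<and> t \<le> t' \<and> cc_out (Alg eps) (cc_run (Alg eps) n a E t v) = Some i \<longrightarrow>
              cc_out (Alg eps) (cc_run (Alg eps) n a E t' v) = Some i"
      using oc by (auto split: if_splits simp del: cc_run.simps)
    define T where "T = Suc (Suc (Suc (Suc (kk eps a))))"
    have Tle: "Suc (Suc (Suc (Suc (kk eps a)))) \<le> T" by (simp add: T_def)
    define l where "l = nat \<lceil>log ((2 + eps) / 2) (real n)\<rceil> + 1"
    have lna: "ln 2 \<le> ln (real a)" using a2 by simp
    have lnn: "ln 2 \<le> ln (real n)" using n2 by simp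
    have Tb: "real T \<le> C * log 2 (real a)"
    proof -
      have y0: "0 \<le> log b (2 * real a)" using b1 a0 by simp
      have k1: "real (kk eps a) \<le> log b (2 * real a) + 1"
        using ceil_le[OF y0] unfolding kk_def b_def[symmetric] .
      have lg: "log b (2 * real a) = (ln 2 + ln (real a)) / ln b"
        using a0 by (simp add: log_def ln_mult)
      have h1: "(ln 2 + ln (real a)) / ln b \<le> 2 * ln (real a) / ln b"
        using lna lb by (simp add: divide_right_mono)
      have h2: "1 \<le> ln (real a) / ln 2" using lna l2 by (simp add: le_divide_eq)
      have eqC: "2 * ln (real a) / ln b + 5 * (ln (real a) / ln 2) = C * log 2 (real a)"
        unfolding C_def log_def using l2 lb by (simp add: field_simps)
      have "real T = real (kk eps a) + 4" unfolding T_def by simp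
      then show ?thesis using k1 lg h1 h2 eqC by linarith
    qed
    have third: "\<exists>T. real T \<le> C * log 2 (real a) \<and>
             (\<forall>v<n. cc_out (Alg eps) (cc_run (Alg eps) n a E T v) \<noteq> None) \<and>
             (\<exists>l. real l \<le> C * log 2 (real n) \<and>
                is_H_partition n E ((2 + eps) * real a) l
                  (\<lambda>v. the (cc_out (Alg eps) (cc_run (Alg eps) n a E T v))))"
    proof -
      have Tnone: "\<forall>v<n. cc_out (Alg eps) (cc_run (Alg eps) n a E T v) \<noteq> None"
      proof (intro allI impI)
        fix v assume "v < n"
        then show "cc_out (Alg eps) (cc_run (Alg eps) n a E T v) \<noteq> None" using oc[of v T] Tle by (simp del: cc_run.simps)
      qed
      have lbound: "real l \<le> C * log 2 (real n)"
      proof -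
        have y0: "0 \<le> log b (real n)" using b1 n2 by simp
        have k1: "real l \<le> log b (real n) + 2"
          using ceil_le[OF y0] unfolding l_def b_def[symmetric] by simp
        have lg: "log b (real n) = ln (real n) / ln b" by (simp add: log_def)
        have "ln (real n) \<le> 2 * ln (real n)" using lnn l2 by linarith
        then have h1: "ln (real n) / ln b \<le> 2 * ln (real n) / ln b"
          using lb by (intro divide_right_mono) auto
        have h2: "1 \<le> ln (real n) / ln 2" using lnn l2 by (simp add: le_divide_eq)
        have eqC: "2 * ln (real n) / ln b + 5 * (ln (real n) / ln 2) = C * log 2 (real n)"
          unfolding C_def log_def using l2 lb by (simp add: field_simps)
        show ?thesis using k1 lg h1 h2 eqC by linarith
      qed
      have Hp: "is_H_partition n E ((2 + eps) * real a) l
                  (\<lambda>v. the (cc_out (Alg eps) (cc_run (Alg eps) n a E T v)))"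
      proof -
        have emp: "Al n E (ddv eps a) l = {}" unfolding l_def by (rule Al_empty[OF sg arb a0 e0]) (use n2 in simp)
        have "is_H_partition n E (ddv eps a) l (hlev n E (ddv eps a))" by (rule Hpart[OF emp])
        moreover have "is_H_partition n E (ddv eps a) l (\<lambda>v. the (cc_out (Alg eps) (cc_run (Alg eps) n a E T v)))
           = is_H_partition n E (ddv eps a) l (hlev n E (ddv eps a))"
          by (rule H_cong) (simp add: oc Tle del: cc_run.simps)
        ultimately show ?thesis by (simp add: ddv_def)
      qed
      show ?thesis
        by (intro exI[of _ T] conjI exI[of _ l]) (rule Tb, rule Tnone, rule lbound, rule Hp)
    qed
    show "(\<forall>t u v. u < n \<and> v < n \<and> u \<noteq> v \<longrightarrow> cc_msg (Alg eps) (cc_run (Alg eps) n a E t u) v < n ^ 3) \<and>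
          (\<forall>t t' v i. v < n \<and> t \<le> t' \<and> cc_out (Alg eps) (cc_run (Alg eps) n a E t v) = Some i \<longrightarrow>
              cc_out (Alg eps) (cc_run (Alg eps) n a E t' v) = Some i) \<and>
          (\<exists>T. real T \<le> C * log 2 (real a) \<and>
             (\<forall>v<n. cc_out (Alg eps) (cc_run (Alg eps) n a E T v) \<noteq> None) \<and>
             (\<exists>l. real l \<le> C * log 2 (real n) \<and>
                is_H_partition n E ((2 + eps) * real a) l
                  (\<lambda>v. the (cc_out (Alg eps) (cc_run (Alg eps) n a E T v)))))"
      by (intro conjI) (rule msgb, rule finl, rule third)
  qed
qed



end
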